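(* Let $d\ge 3$. For $(i,j)\in\mathbb{Z}_d\times\mathbb{Z}_d$ with $i\neq 0$ define $$\mathcal{C}_{i,j}=\{(x,y)\in\mathbb{Z}_d\times\mathbb{Z}_d:\ iy-jx\equiv 0 \pmod d,\ x\in i\mathbb{Z}_d\},$$ where $i\mathbb{Z}_d=\{ik \bmod d: k\in\mathbb{Z}_d\}$, and define $\mathcal{C}_{0,0}=\{(0,y):y\in\mathbb{Z}_d\}$. Then: (1) for every $i\ne 0$ and every $j$, $\mathcal{C}_{i,j}$ is a maximally commutative set with exactly $d$ elements; (2) every maximally commutative set in $\mathbb{Z}_d\times\mathbb{Z}_d$ equals $\mathcal{C}_{0,0}$ or $\mathcal{C}_{i,j}$ for some $i\ne 0$; (3) the sets in $$\mathcal{MCS}_d=\{\mathcal{C}_{i,j}: 1\le i<d,\ i\mid d,\ 0\le j\le d/i-1\}\cup\{\mathcal{C}_{0,0}\}$$ are pairwise distinct and are exactly all the maximally commutative sets; in particular the number of maximally commutative sets is $\sigma(d)$, the sum of all positive divisors of $d$.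
   Context: $\mathbb{Z}_d=\{0,1,\dots,d-1\}$ with addition and multiplication mod $d$. Two pairs $(m,n),(m',n')\in\mathbb{Z}_d\times\mathbb{Z}_d$ are said to commute if $mn'-nm'\equiv 0 \pmod d$ (equivalently the generalized Pauli matrices $X^mZ^n$ and $X^{m'}Z^{n'}$ commute, where $X=\sum_i|i+1\bmod d\rangle\langle i|$, $Z=\sum_i e^{2\pi\sqrt{-1}i/d}|i\rangle\langle i|$). A subset $\mathcal{C}\subseteq\mathbb{Z}_d\times\mathbb{Z}_d$ is a maximally commutative set (MCS) if any two of its elements commute and no element of $(\mathbb{Z}_d\times\mathbb{Z}_d)\setminus\mathcal{C}$ commutes with every element of $\mathcal{C}$. $\sigma(d)=\sum_{k\mid d,\,k\ge1}k$. *)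

theory Defs
  imports Main
begin

definition Zd :: "nat \<Rightarrow> nat set" where
  "Zd d = {0..<d}"

definition commutes :: "nat \<Rightarrow> nat \<times> nat \<Rightarrow> nat \<times> nat \<Rightarrow> bool" where
  "commutes d p q \<longleftrightarrow> (int (fst p) * int (snd q) - int (snd p) * int (fst q)) mod int d = 0"

definition is_MCS :: "nat \<Rightarrow> (nat \<times> nat) set \<Rightarrow> bool" where
  "is_MCS d C \<longleftrightarrow> C \<subseteq> Zd d \<times> Zd d
     \<and> (\<forall>p\<in>C. \<forall>q\<in>C. commutes d p q)
     \<and> (\<forall>p \<in> (Zd d \<times> Zd d) - C. \<not> (\<forall>q\<in>C. commutes d p q))"

definition mult_set :: "nat \<Rightarrow> nat \<Rightarrow> nat set" where
  "mult_set d i = {(i * k) mod d | k. k \<in> Zd d}"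

definition Cset :: "nat \<Rightarrow> nat \<Rightarrow> nat \<Rightarrow> (nat \<times> nat) set" where
  "Cset d i j = {(x, y). x \<in> Zd d \<and> y \<in> Zd d
      \<and> (int i * int y - int j * int x) mod int d = 0 \<and> x \<in> mult_set d i}"

definition C00 :: "nat \<Rightarrow> (nat \<times> nat) set" where
  "C00 d = {(0, y) | y. y \<in> Zd d}"

definition MCS_index :: "nat \<Rightarrow> (nat \<times> nat) set" where
  "MCS_index d = {(i, j). 1 \<le> i \<and> i < d \<and> i dvd d \<and> j \<le> d div i - 1}"

definition MCS_family :: "nat \<Rightarrow> (nat \<times> nat) set set" where
  "MCS_family d = (\<lambda>(i, j). Cset d i j) ` MCS_index d \<union> {C00 d}"

definition sigma_div :: "nat \<Rightarrow> nat" where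
  "sigma_div d = (\<Sum>k \<in> {k. k dvd d \<and> k \<ge> 1}. k)"

end

theory Submission
  imports Defs
begin

lemma commutes_iff: "commutes d p q \<longleftrightarrow> int d dvd (int (fst p) * int (snd q) - int (snd p) * int (fst q))"
  by (simp add: commutes_def dvd_eq_mod_eq_0)

lemma mult_set_char:
  assumes "0 < i" "0 < d"
  shows "mult_set d i = {x. x < d \<and> gcd i d dvd x}"
proof
  show "mult_set d i \<subseteq> {x. x < d \<and> gcd i d dvd x}"
    using assms by (auto simp: mult_set_def intro!: dvd_mod)
next
  show "{x. x < d \<and> gcd i d dvd x} \<subseteq> mult_set d i"
  proof
    fix x assume "x \<in> {x. x < d \<and> gcd i d dvd x}"
    then obtain m where x: "x < d" "x = gcd i d * m" by auto
    obtain a b where ab: "i * a = d * b + gcd i d" using bezout_nat[of i d] assms by auto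
    have "(i * ((a*m) mod d)) mod d = (i * a * m) mod d" by (simp add: mod_mult_right_eq mult.assoc)
    also have "\<dots> = (d * (b*m) + gcd i d * m) mod d" using ab by (simp add: algebra_simps)
    also have "\<dots> = x" using x by simp
    finally show "x \<in> mult_set d i" unfolding mult_set_def Zd_def using assms by force
  qed
qed

lemma Cset_mem:
  assumes "0<i" "i<d" "i = i'*g" "d = d'*g" "g = gcd i d"
  shows "(x,y) \<in> Cset d i j \<longleftrightarrow> x<d \<and> y<d \<and> (\<exists>a. x = a*g \<and> int d' dvd (int i' * int y - int j * int a))"
proof -
  have g0: "g > 0" using assms(1,5) by simp
  have e: "int d dvd (int i * int y - int j * int (a*g)) \<longleftrightarrow> int d' dvd (int i' * int y - int j * int a)" for a
  proof -
    have "int i * int y - int j * int (a*g) = (int i' * int y - int j * int a) * int g"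
      using assms(3) by (simp add: algebra_simps)
    moreover have "int d = int d' * int g" using assms(4) by simp
    ultimately show ?thesis using g0 by (simp add: dvd_mult_cancel_right)
  qed
  have ms: "x \<in> mult_set d i \<longleftrightarrow> x < d \<and> g dvd x" using mult_set_char[of i d] assms(1,2,5) by auto
  show ?thesis
  proof
    assume h: "(x,y) \<in> Cset d i j"
    then have h1: "x<d" "y<d" "int d dvd (int i * int y - int j * int x)" "g dvd x"
      unfolding Cset_def Zd_def using ms by (auto simp: dvd_eq_mod_eq_0)
    then obtain a where "x = a*g" by (metis dvdE mult.commute)
    then show "x<d \<and> y<d \<and> (\<exists>a. x = a*g \<and> int d' dvd (int i' * int y - int j * int a))"
      using h1 e by blast
  next
    assume "x<d \<and> y<d \<and> (\<exists>a. x = a*g \<and> int d' dvd (int i' * int y - int j * int a))"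
    then obtain a where h: "x<d" "y<d" "x = a*g" "int d' dvd (int i' * int y - int j * int a)" by blast
    then have "int d dvd (int i * int y - int j * int x)" "g dvd x" using e by auto
    then show "(x,y) \<in> Cset d i j" unfolding Cset_def Zd_def using ms h by (auto simp: dvd_eq_mod_eq_0)
  qed
qed

lemma int_mod_eq: "int (a mod b) = int a - int b * int (a div b)"
  using mod_mult_div_eq[of a b] by (metis add_diff_cancel_right' of_nat_add of_nat_mult)

lemma part1:
  assumes "0<i" "i<d"
  shows "is_MCS d (Cset d i j) \<and> card (Cset d i j) = d"
proof -
  define g where "g = gcd i d"
  obtain i' d' where id: "i = i'*g" "d = d'*g" "coprime i' d'"
    using gcd_coprime_exists[of i d] assms unfolding g_def by (metis gcd_eq_0_iff not_less0)
  have g0: "g > 0" using assms g_def by simp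
  have d'0: "d' > 0" using id(2) assms by (cases d') auto
  have i'0: "i' > 0" using id(1) assms by (cases i') auto
  have gi: "g \<le> i" using assms unfolding g_def by (simp add: gcd_le1_nat)
  have cop: "coprime (int i') (int d')" using id(3) by simp
  note mem = Cset_mem[OF assms id(1,2) g_def]
  obtain y0 where y0: "y0 < d'" "int d' dvd (int i' * int y0 - int j)"
  proof -
    obtain a b where ab: "i' * a = d' * b + 1" using bezout_nat[of i' d'] i'0 id(3) by auto
    have "int i' * int ((j*a) mod d') - int j = int d' * (int j * int b - int i' * int ((j*a) div d'))"
    proof -
      have E: "int i' * int a = int d' * int b + 1" using arg_cong[OF ab, of int] by simp
      have "int i' * (int j*int a) = int j * (int i' * int a)" by simp
      also have "\<dots> = int j*(int d' * int b + 1)" using E by simp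
      finally have "int i' * (int j * int a) - int j = int d' * (int j * int b)" by (simp add: algebra_simps)
      then show ?thesis unfolding int_mod_eq by (simp add: algebra_simps)
    qed
    then show ?thesis using that[of "(j*a) mod d'"] d'0 by simp
  qed
  have comm: "commutes d p q" if "p \<in> Cset d i j" "q \<in> Cset d i j" for p q
  proof -
    obtain x y x' y' where pq: "p = (x,y)" "q = (x',y')" by (cases p, cases q) auto
    have m1: "(x,y) \<in> Cset d i j" "(x',y') \<in> Cset d i j" using that pq by auto
    obtain a where h1: "x = a*g" "int d' dvd (int i' * int y - int j * int a)"
      using mem[THEN iffD1, OF m1(1)] by blast
    obtain a' where h2: "x' = a'*g" "int d' dvd (int i' * int y' - int j * int a')"
      using mem[THEN iffD1, OF m1(2)] by blast
    note h = h1 h2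
    have "int i' * (int a * int y' - int y * int a') = int a * (int i' * int y' - int j * int a') - int a' * (int i' * int y - int j * int a)"
      by (simp add: algebra_simps)
    then have "int d' dvd int i' * (int a * int y' - int y * int a')" using h by simp
    then have "int d' dvd (int a * int y' - int y * int a')" using cop
      by (meson coprime_commute coprime_dvd_mult_right_iff)
    then have "int d' * int g dvd (int a * int y' - int y * int a') * int g" by (rule mult_dvd_mono) simp
    moreover have "(int a * int y' - int y * int a') * int g = int x * int y' - int y * int x'"
      using h by (simp add: algebra_simps)
    ultimately show ?thesis unfolding commutes_iff pq using id(2) by simp
  qed
  have maxi: "\<not> (\<forall>q\<in>Cset d i j. commutes d p q)" if "p \<in> (Zd d \<times> Zd d) - Cset d i j" for p
  proof
    assume all: "\<forall>q\<in>Cset d i j. commutes d p q"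
    obtain u v where p: "p = (u,v)" by (cases p)
    have uv: "u < d" "v < d" using that p by (auto simp: Zd_def)
    have gu: "g dvd u"
    proof (cases "g = 1")
      case False
      then have "d' < d" using id(2) g0 d'0 by simp
      then have "(0, d') \<in> Cset d i j" using mem assms by auto
      then have "commutes d (u,v) (0,d')" using all p by blast
      then have "int d dvd int u * int d'" by (simp add: commutes_iff)
      then have "int g * int d' dvd int u * int d'" using id(2) by (simp add: mult.commute)
      then have "int g dvd int u" using d'0 by simp
      then show ?thesis by simp
    qed simp
    then obtain a where a: "u = a*g" by (metis dvdE mult.commute)
    have "d' \<le> d" using id(2) g0 by simp
    then have "y0 < d" using y0(1) by simp
    moreover have "g < d" using gi assms(2) by simp
    moreover have "g = 1*g \<and> int d' dvd (int i' * int y0 - int j * int 1)" using y0 by simp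
    ultimately have "(g, y0) \<in> Cset d i j" using mem by blast
    then have "commutes d (u,v) (g,y0)" using all p by blast
    then have "int d dvd int u * int y0 - int v * int g" by (simp add: commutes_iff)
    moreover have "int u * int y0 - int v * int g = (int a * int y0 - int v) * int g" using a by (simp add: algebra_simps)
    ultimately have "int d' * int g dvd (int a * int y0 - int v) * int g" using id(2) by simp
    then have h1: "int d' dvd int a * int y0 - int v" using g0 by simp
    have "int i' * int v - int j * int a = int a * (int i' * int y0 - int j) - int i' * (int a * int y0 - int v)"
      by (simp add: algebra_simps)
    then have "int d' dvd int i' * int v - int j * int a" using h1 y0(2) by simp
    then have "p \<in> Cset d i j" using mem p uv a by blast
    then show False using that by simp
  qed
  have sub: "Cset d i j \<subseteq> Zd d \<times> Zd d" unfolding Cset_def by auto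
  define f where "f = (\<lambda>(a,t). (a*g, (a*y0) mod d' + d'*t))"
  have inj: "inj_on f ({..<d'} \<times> {..<g})"
  proof (rule inj_onI)
    fix p q assume "p \<in> {..<d'} \<times> {..<g}" "q \<in> {..<d'} \<times> {..<g}" "f p = f q"
    then show "p = q" using g0 d'0 unfolding f_def by (cases p, cases q) auto
  qed
  have img: "f ` ({..<d'} \<times> {..<g}) = Cset d i j"
  proof
    show "f ` ({..<d'} \<times> {..<g}) \<subseteq> Cset d i j"
    proof (rule image_subsetI)
      fix p assume "p \<in> {..<d'} \<times> {..<g}"
      then obtain a t where at: "a < d'" "t < g" and p: "p = (a,t)" by auto
      have x: "a*g < d" using at id(2) g0 by simp
      have "(a*y0) mod d' + d'*t < d' + d'*t" using d'0 by simp
      also have "\<dots> = d' * (t+1)" by simp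
      also have "\<dots> \<le> d" using id(2) at(2) by (metis Suc_eq_plus1 Suc_leI mult.commute mult_le_mono2)
      finally have y: "(a*y0) mod d' + d'*t < d" .
      have "int i' * int ((a*y0) mod d' + d'*t) - int j * int a
          = int a * (int i' * int y0 - int j) + int d' * (int i' * int t - int i' * int ((a*y0) div d'))"
        unfolding of_nat_add int_mod_eq by (simp add: algebra_simps)
      then have "int d' dvd int i' * int ((a*y0) mod d' + d'*t) - int j * int a" using y0(2) by simp
      then show "f p \<in> Cset d i j" unfolding f_def p using mem x y by auto
    qed
  next
    show "Cset d i j \<subseteq> f ` ({..<d'} \<times> {..<g})"
    proof clarify
      fix x y assume "(x,y) \<in> Cset d i j"
      then obtain a where h: "x<d" "y<d" "x = a*g" "int d' dvd (int i' * int y - int j * int a)"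
        using mem by blast
      have a: "a < d'" using h id(2) g0 by simp
      have t: "y div d' < g" using h(2) id(2) d'0 by (simp add: div_less_iff_less_mult mult.commute)
      have "int i' * (int y - int (a*y0)) = (int i' * int y - int j * int a) - int a * (int i' * int y0 - int j)"
        by (simp add: algebra_simps)
      then have "int d' dvd int i' * (int y - int (a*y0))" using h(4) y0(2) by simp
      then have "int d' dvd (int y - int (a*y0))" using cop
        by (meson coprime_commute coprime_dvd_mult_right_iff)
      then have "int y mod int d' = int (a*y0) mod int d'" by (simp add: mod_eq_dvd_iff)
      then have "y mod d' = (a*y0) mod d'" by (metis of_nat_eq_iff of_nat_mod)
      then have "y = (a*y0) mod d' + d' * (y div d')" by (metis mod_mult_div_eq)
      then have "(x,y) = f (a, y div d')" unfolding f_def using h by simp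
      then show "(x,y) \<in> f ` ({..<d'} \<times> {..<g})" using a t by blast
    qed
  qed
  have c: "card (Cset d i j) = d" using card_image[OF inj] img id(2) by simp
  have "is_MCS d (Cset d i j)" unfolding is_MCS_def
  proof (intro conjI ballI)
    show "Cset d i j \<subseteq> Zd d \<times> Zd d" by (rule sub)
  next
    fix p q assume "p \<in> Cset d i j" "q \<in> Cset d i j" then show "commutes d p q" by (rule comm)
  next
    fix p assume "p \<in> Zd d \<times> Zd d - Cset d i j" then show "\<not> (\<forall>q\<in>Cset d i j. commutes d p q)" by (rule maxi)
  qed
  then show ?thesis using c by simp
qed

lemma MCS_closed:
  assumes C: "is_MCS d C" and d: "d > 0" and p: "(x,y) \<in> C" and q: "(x0,y0) \<in> C"
  shows "((x + k*x0) mod d, (y + k*y0) mod d) \<in> C"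
proof (rule ccontr)
  let ?p = "((x + k*x0) mod d, (y + k*y0) mod d)"
  assume nin: "?p \<notin> C"
  have "?p \<in> Zd d \<times> Zd d" using d by (simp add: Zd_def)
  then have "\<not> (\<forall>r\<in>C. commutes d ?p r)" using C nin unfolding is_MCS_def by blast
  then obtain r where r: "r \<in> C" "\<not> commutes d ?p r" by blast
  obtain r1 r2 where rr: "r = (r1,r2)" by (cases r)
  have c1: "int d dvd int x * int r2 - int y * int r1" using C p r(1) rr unfolding is_MCS_def commutes_iff by fastforce
  have c2: "int d dvd int x0 * int r2 - int y0 * int r1" using C q r(1) rr unfolding is_MCS_def commutes_iff by fastforce
  have "int ((x + k*x0) mod d) * int r2 - int ((y + k*y0) mod d) * int r1
     = (int x * int r2 - int y * int r1) + int k * (int x0 * int r2 - int y0 * int r1)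
       - int d * (int ((x + k*x0) div d) * int r2 - int ((y + k*y0) div d) * int r1)"
    unfolding int_mod_eq by (simp add: algebra_simps)
  then have "int d dvd int ((x + k*x0) mod d) * int r2 - int ((y + k*y0) mod d) * int r1"
    using c1 c2 by simp
  then have "commutes d ?p r" unfolding commutes_iff rr by simp
  then show False using r by simp
qed

lemma MCS_eq:
  assumes C: "is_MCS d C" and D: "D \<subseteq> Zd d \<times> Zd d" "\<forall>p\<in>D. \<forall>q\<in>D. commutes d p q" and CD: "C \<subseteq> D"
  shows "C = D"
proof (rule ccontr)
  assume "C \<noteq> D"
  then obtain p where "p \<in> D" "p \<notin> C" using CD by blast
  then have "p \<in> Zd d \<times> Zd d - C" "\<forall>q\<in>C. commutes d p q" using D CD by auto
  then show False using C unfolding is_MCS_def by blast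
qed

lemma C00_MCS:
  assumes "d \<ge> 2"
  shows "is_MCS d (C00 d)"
  unfolding is_MCS_def
proof (intro conjI ballI)
  show "C00 d \<subseteq> Zd d \<times> Zd d" using assms by (auto simp: C00_def Zd_def)
next
  fix p q assume "p \<in> C00 d" "q \<in> C00 d" then show "commutes d p q" by (auto simp: C00_def commutes_def)
next
  fix p assume p: "p \<in> Zd d \<times> Zd d - C00 d"
  obtain u v where uv: "p = (u,v)" by (cases p)
  have u: "0 < u" "u < d" using p uv by (auto simp: C00_def Zd_def)
  have one: "(0,1) \<in> C00 d" using assms by (auto simp: C00_def Zd_def)
  have "\<not> commutes d p (0,1)" using u uv by (auto simp: commutes_iff zdvd_not_zless)
  then show "\<not> (\<forall>q\<in>C00 d. commutes d p q)" using one by blast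
qed

lemma part2:
  assumes C: "is_MCS d C" and d: "d \<ge> 2"
  shows "C = C00 d \<or> (\<exists>g y0. 0 < g \<and> g < d \<and> g dvd d \<and> y0 < d \<and> C = Cset d g y0)"
proof (cases "\<forall>p\<in>C. fst p = 0")
  case True
  have "C \<subseteq> C00 d" using True C unfolding is_MCS_def C00_def Zd_def by force
  moreover have "\<forall>p\<in>C00 d. \<forall>q\<in>C00 d. commutes d p q" "C00 d \<subseteq> Zd d \<times> Zd d"
    using C00_MCS[OF d] unfolding is_MCS_def by auto
  ultimately show ?thesis using MCS_eq[OF C] by blast
next
  case False
  have d0: "d > 0" using d by simp
  have CZ: "C \<subseteq> Zd d \<times> Zd d" using C unfolding is_MCS_def by blast
  define S where "S = {x. 0 < x \<and> (\<exists>y. (x,y) \<in> C)}"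
  obtain p where p: "p \<in> C" "fst p \<noteq> 0" using False by blast
  have "fst p \<in> S" unfolding S_def using p by (cases p) auto
  then have "S \<noteq> {}" by blast
  define g where "g = (LEAST x. x \<in> S)"
  have gS: "g \<in> S" unfolding g_def using \<open>S \<noteq> {}\<close> by (metis LeastI equals0I)
  have gmin: "\<And>x. x \<in> S \<Longrightarrow> g \<le> x" unfolding g_def by (rule Least_le)
  obtain y0 where y0: "(g,y0) \<in> C" using gS S_def by blast
  have g0: "0 < g" using gS S_def by blast
  have gd: "g < d" "y0 < d" using y0 CZ by (auto simp: Zd_def)
  have gx: "g dvd x" if "(x,y) \<in> C" for x y
  proof -
    have xd: "x < d" using that CZ by (auto simp: Zd_def)
    define q where "q = x div g"
    have qx: "q * g \<le> x" unfolding q_def by simp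
    have "q \<le> x" unfolding q_def by simp
    then have qd: "q \<le> d" using xd by simp
    have x1: "x = x mod g + q*g" unfolding q_def by simp
    have x2: "(d-q)*g + q*g = d*g" using qd by (metis add_mult_distrib le_add_diff_inverse2)
    have "x + (d - q)*g = x mod g + d*g" using x1 x2 by linarith
    moreover have "(x mod g + d*g) mod d = (x mod g) mod d" by simp
    moreover have "x mod g < d" using gd g0 by (meson mod_less_divisor order.strict_trans)
    ultimately have e: "(x + (d - q)*g) mod d = x mod g" by simp
    have "((x + (d-q)*g) mod d, (y + (d-q)*y0) mod d) \<in> C" by (rule MCS_closed[OF C d0 that y0])
    then have "x mod g = 0 \<or> x mod g \<in> S" unfolding S_def e by auto
    moreover have "x mod g < g" using g0 by simp
    ultimately show ?thesis using gmin by (meson mod_eq_0_iff_dvd not_le)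
  qed
  have gdd: "g dvd d"
  proof (rule ccontr)
    assume nd: "\<not> g dvd d"
    define r where "r = d mod g"
    have "r \<noteq> 0" using nd unfolding r_def by (simp add: dvd_eq_mod_eq_0)
    then have r: "0 < r" "r < g" using g0 unfolding r_def by auto
    have "d div g * g + r = d" unfolding r_def by simp
    then have "g + (d div g)*g = (g - r) + d" using r by linarith
    moreover have "((g - r) + d) mod d = (g - r) mod d" by simp
    moreover have "g - r < d" using gd by simp
    ultimately have e: "(g + (d div g)*g) mod d = g - r" by simp
    have "((g + (d div g)*g) mod d, (y0 + (d div g)*y0) mod d) \<in> C" by (rule MCS_closed[OF C d0 y0 y0])
    then have "g - r \<in> S" unfolding S_def e using r by auto
    then show False using gmin r by force
  qed
  have sub: "C \<subseteq> Cset d g y0"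
  proof
    fix p assume pC: "p \<in> C"
    obtain x y where p: "p = (x,y)" by (cases p)
    have xy: "x < d" "y < d" using pC p CZ by (auto simp: Zd_def)
    have "commutes d (g,y0) (x,y)" using C y0 pC p unfolding is_MCS_def by blast
    then have c: "(int g * int y - int y0 * int x) mod int d = 0" by (simp add: commutes_def)
    have "gcd g d = g" using gdd by simp
    then have "x \<in> mult_set d g" using mult_set_char[OF g0 d0] gx[OF pC[unfolded p]] xy by simp
    then show "p \<in> Cset d g y0" using p xy c unfolding Cset_def Zd_def by simp
  qed
  have "is_MCS d (Cset d g y0)" using part1[OF g0 gd(1)] by blast
  then have "C = Cset d g y0" using MCS_eq[OF C _ _ sub] unfolding is_MCS_def by blast
  then show ?thesis using g0 gd gdd by blast
qed

lemma Cset_dvd_mem: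
  assumes "0<g" "g<d" "g dvd d"
  shows "(x,y) \<in> Cset d g j \<longleftrightarrow> x<d \<and> y<d \<and> (\<exists>a. x = a*g \<and> int (d div g) dvd (int y - int j * int a))"
proof -
  have "g = 1*g" by simp
  moreover have "d = (d div g)*g" using assms(3) by simp
  moreover have "g = gcd g d" using assms(3) by (simp add: gcd_nat.absorb1)
  ultimately show ?thesis using Cset_mem[OF assms(1,2), of 1 g "d div g" x y j] by simp
qed

lemma Cset_reduce:
  assumes "0<g" "g<d" "g dvd d"
  shows "Cset d g j = Cset d g (j mod (d div g))"
proof -
  have e: "int (d div g) dvd (int y - int j * int a) \<longleftrightarrow> int (d div g) dvd (int y - int (j mod (d div g)) * int a)" for y a
  proof -
    have E: "int y - int (j mod (d div g)) * int a = (int y - int j * int a) + int (d div g) * (int (j div (d div g)) * int a)"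
      unfolding int_mod_eq by (simp add: algebra_simps)
    show ?thesis unfolding E by (rule dvd_add_left_iff[symmetric]) simp
  qed
  show ?thesis
  proof (intro set_eqI)
    fix p show "p \<in> Cset d g j \<longleftrightarrow> p \<in> Cset d g (j mod (d div g))"
      using Cset_dvd_mem[OF assms, of "fst p" "snd p"] e by (cases p) simp
  qed
qed

lemma index_props:
  assumes "(i,j) \<in> MCS_index d"
  shows "0 < i" "i < d" "i dvd d" "j < d div i" "(i,j) \<in> Cset d i j"
proof -
  show i: "0 < i" "i < d" "i dvd d" using assms by (auto simp: MCS_index_def)
  have "d div i > 0" using i by (simp add: div_greater_zero_iff dvd_imp_le)
  then show j: "j < d div i" using assms by (auto simp: MCS_index_def)
  have "j < d" using j i by (metis div_le_dividend order.strict_trans2)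
  then show "(i,j) \<in> Cset d i j" using Cset_dvd_mem[OF i, of i j j] i by simp
qed

lemma Cset_x_dvd:
  assumes "0<g" "g<d" "g dvd d" "(x,y) \<in> Cset d g j"
  shows "g dvd x"
  using Cset_dvd_mem[OF assms(1-3)] assms(4) by auto

lemma small_dvd_eq:
  assumes "int n dvd int a - int b" "a < n" "b < n"
  shows "a = b"
proof -
  have "int a mod int n = int b mod int n" using assms(1) by (simp add: mod_eq_dvd_iff)
  then show ?thesis using assms(2,3) by simp
qed

lemma index_inj:
  assumes "d \<ge> 3"
  shows "inj_on (\<lambda>(i, j). Cset d i j) (MCS_index d)"
proof (rule inj_onI)
  fix p q assume p: "p \<in> MCS_index d" and q: "q \<in> MCS_index d" and eq: "(\<lambda>(i, j). Cset d i j) p = (\<lambda>(i, j). Cset d i j) q"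
  obtain i j i' j' where pq: "p = (i,j)" "q = (i',j')" by (cases p, cases q) auto
  note P = index_props[OF p[unfolded pq]] and Q = index_props[OF q[unfolded pq]]
  have eq': "Cset d i j = Cset d i' j'" using eq pq by simp
  have "i' dvd i" using Cset_x_dvd[OF Q(1-3)] P(5) eq' by blast
  moreover have "i dvd i'" using Cset_x_dvd[OF P(1-3)] Q(5) eq' by blast
  ultimately have ii: "i = i'" by (simp add: dvd_antisym)
  have "(i,j) \<in> Cset d i j'" using P(5) eq' ii by simp
  then obtain a where a: "i = a*i" "int (d div i) dvd (int j - int j' * int a)"
    using Cset_dvd_mem[OF P(1-3)] by blast
  have "a = 1" using a(1) P(1) by simp
  then have "j = j'" using small_dvd_eq[of "d div i" j j'] a(2) P(4) Q(4) ii by simp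
  then show "p = q" using pq ii by simp
qed

lemma sum_divisors:
  assumes "d > 0"
  shows "sigma_div d = (\<Sum>i\<in>{i. 1 \<le> i \<and> i < d \<and> i dvd d}. d div i) + 1"
proof -
  let ?I = "{i. 1 \<le> i \<and> i < d \<and> i dvd d}"
  have fin: "finite ?I" by (rule finite_subset[of _ "{..<d}"]) auto
  have dd: "d div (d div k) = k" if kd: "k dvd d" for k
  proof -
    obtain m where m: "d = k*m" using kd unfolding dvd_def by blast
    then show ?thesis using assms by (cases "k = 0") auto
  qed
  have "sigma_div d = (\<Sum>i\<in>insert d ?I. d div i)"
    unfolding sigma_div_def
  proof (rule sum.reindex_bij_witness[where i="\<lambda>i. d div i" and j="\<lambda>k. d div k"])
    fix a assume a: "a \<in> {k. k dvd d \<and> k \<ge> 1}"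
    then show "d div (d div a) = a" using dd by simp
    show "d div a \<in> insert d ?I"
    proof (cases "a = 1")
      case False
      have "d div a \<ge> 1" using a assms by (auto simp: div_greater_zero_iff dvd_imp_le dvd_imp_le)
      moreover have "d div a < d" using a False assms by (auto intro!: div_less_dividend)
      moreover have "d div a dvd d" using a by (auto elim!: dvdE)
      ultimately show ?thesis by simp
    qed simp
    show "d div (d div a) = a" using dd a by simp
  next
    fix b assume b: "b \<in> insert d ?I"
    then have bd: "b dvd d" "b > 0" using assms by auto
    then show "d div (d div b) = b" using dd by simp
    have "d div b \<ge> 1" using bd assms by (auto simp: div_greater_zero_iff dvd_imp_le dvd_imp_le)
    moreover have "d div b dvd d" using bd by (auto elim!: dvdE)
    ultimately show "d div b \<in> {k. k dvd d \<and> k \<ge> 1}" by simp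
  qed
  also have "\<dots> = d div d + (\<Sum>i\<in>?I. d div i)" using fin by (subst sum.insert) auto
  finally show ?thesis using assms by simp
qed

lemma card_index:
  assumes "d > 0"
  shows "card (MCS_index d) = (\<Sum>i\<in>{i. 1 \<le> i \<and> i < d \<and> i dvd d}. d div i)"
proof -
  let ?I = "{i. 1 \<le> i \<and> i < d \<and> i dvd d}"
  have fin: "finite ?I" by (rule finite_subset[of _ "{..<d}"]) auto
  have "MCS_index d = (SIGMA i:?I. {..d div i - 1})" unfolding MCS_index_def by auto
  then have "card (MCS_index d) = (\<Sum>i\<in>?I. card {..d div i - 1})" using fin by simp
  also have "\<dots> = (\<Sum>i\<in>?I. d div i)"
  proof (rule sum.cong)
    fix i assume "i \<in> ?I"
    then have "d div i > 0" by (auto simp: div_greater_zero_iff dvd_imp_le)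
    then show "card {..d div i - 1} = d div i" by simp
  qed simp
  finally show ?thesis .
qed

theorem theorem3:
  fixes d :: nat
  assumes "d \<ge> 3"
  shows "(\<forall>i\<in>Zd d. \<forall>j\<in>Zd d. i \<noteq> 0 \<longrightarrow> is_MCS d (Cset d i j) \<and> card (Cset d i j) = d)
    \<and> (\<forall>C. is_MCS d C \<longrightarrow> C = C00 d \<or> (\<exists>i\<in>Zd d. \<exists>j\<in>Zd d. i \<noteq> 0 \<and> C = Cset d i j))
    \<and> inj_on (\<lambda>(i, j). Cset d i j) (MCS_index d)
    \<and> C00 d \<notin> (\<lambda>(i, j). Cset d i j) ` MCS_index d
    \<and> MCS_family d = {C. is_MCS d C}
    \<and> card {C. is_MCS d C} = sigma_div d"
proof -
  have d2: "d \<ge> 2" and d0: "d > 0" using assms by auto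
  have P1: "\<forall>i\<in>Zd d. \<forall>j\<in>Zd d. i \<noteq> 0 \<longrightarrow> is_MCS d (Cset d i j) \<and> card (Cset d i j) = d"
    using part1 by (auto simp: Zd_def)
  have P2: "\<forall>C. is_MCS d C \<longrightarrow> C = C00 d \<or> (\<exists>i\<in>Zd d. \<exists>j\<in>Zd d. i \<noteq> 0 \<and> C = Cset d i j)"
  proof (intro allI impI)
    fix C assume "is_MCS d C"
    from part2[OF this d2] show "C = C00 d \<or> (\<exists>i\<in>Zd d. \<exists>j\<in>Zd d. i \<noteq> 0 \<and> C = Cset d i j)"
    proof
      assume "\<exists>g y0. 0 < g \<and> g < d \<and> g dvd d \<and> y0 < d \<and> C = Cset d g y0"
      then obtain g y0 where g: "0 < g" "g < d" "y0 < d" "C = Cset d g y0" by blast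
      then have "g \<in> Zd d" "y0 \<in> Zd d" "g \<noteq> 0" by (auto simp: Zd_def)
      then show ?thesis using g(4) by blast
    qed simp
  qed
  have P3: "inj_on (\<lambda>(i, j). Cset d i j) (MCS_index d)" by (rule index_inj[OF assms])
  have P4: "C00 d \<notin> (\<lambda>(i, j). Cset d i j) ` MCS_index d"
  proof
    assume "C00 d \<in> (\<lambda>(i, j). Cset d i j) ` MCS_index d"
    then obtain i j where ij: "(i,j) \<in> MCS_index d" "C00 d = Cset d i j" by auto
    then have "(i,j) \<in> C00 d" using index_props(5)[OF ij(1)] by simp
    then show False using index_props(1)[OF ij(1)] by (auto simp: C00_def)
  qed
  have P5: "MCS_family d = {C. is_MCS d C}"
  proof
    show "MCS_family d \<subseteq> {C. is_MCS d C}"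
    proof
      fix C assume "C \<in> MCS_family d"
      then have "C = C00 d \<or> (\<exists>i j. (i,j) \<in> MCS_index d \<and> C = Cset d i j)"
        unfolding MCS_family_def by auto
      then show "C \<in> {C. is_MCS d C}"
      proof
        assume "C = C00 d" then show ?thesis using C00_MCS[OF d2] by simp
      next
        assume "\<exists>i j. (i,j) \<in> MCS_index d \<and> C = Cset d i j"
        then obtain i j where ij: "(i,j) \<in> MCS_index d" "C = Cset d i j" by blast
        then show ?thesis using part1[OF index_props(1,2)[OF ij(1)]] by simp
      qed
    qed
  next
    show "{C. is_MCS d C} \<subseteq> MCS_family d"
    proof
      fix C assume "C \<in> {C. is_MCS d C}"
      then have "C = C00 d \<or> (\<exists>g y0. 0 < g \<and> g < d \<and> g dvd d \<and> y0 < d \<and> C = Cset d g y0)"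
        using part2 d2 by blast
      then show "C \<in> MCS_family d"
      proof
        assume "C = C00 d" then show ?thesis unfolding MCS_family_def by simp
      next
        assume "\<exists>g y0. 0 < g \<and> g < d \<and> g dvd d \<and> y0 < d \<and> C = Cset d g y0"
        then obtain g y0 where g: "0 < g" "g < d" "g dvd d" "C = Cset d g y0" by blast
        have "d div g > 0" using g by (simp add: div_greater_zero_iff dvd_imp_le)
        then have "(g, y0 mod (d div g)) \<in> MCS_index d" using g unfolding MCS_index_def
          by (simp add: less_Suc_eq_le[symmetric])
        moreover have "C = Cset d g (y0 mod (d div g))" using Cset_reduce[OF g(1-3)] g(4) by simp
        ultimately show ?thesis unfolding MCS_family_def by force
      qed
    qed
  qed
  have fin: "finite (MCS_index d)"
  proof (rule finite_subset[of _ "{..<d} \<times> {..<d}"])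
    show "MCS_index d \<subseteq> {..<d} \<times> {..<d}"
    proof
      fix p assume p: "p \<in> MCS_index d"
      obtain i j where ij: "p = (i,j)" by (cases p)
      have "i < d" "j < d div i" "d div i \<le> d" using index_props[of i j d] p ij by auto
      then have "j < d" by (meson div_le_dividend less_le_trans)
      then show "p \<in> {..<d} \<times> {..<d}" using ij \<open>i < d\<close> by simp
    qed
  qed simp
  have "card {C. is_MCS d C} = card ((\<lambda>(i, j). Cset d i j) ` MCS_index d) + 1"
    unfolding P5[symmetric] MCS_family_def using P4 fin by simp
  also have "\<dots> = card (MCS_index d) + 1" using card_image[OF P3] by simp
  also have "\<dots> = sigma_div d" using card_index[OF d0] sum_divisors[OF d0] by simp
  finally have P6: "card {C. is_MCS d C} = sigma_div d" .
  show ?thesis using P1 P2 P3 P4 P5 P6 by blast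
qed

end
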